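(* There is a unique function $\phi\colon\mathrm{SL}_2(\mathbb{Z})\times\mathrm{SL}_2(\mathbb{Z})\to\frac{1}{12}\mathbb{Z}$ which is left $\mathrm{SL}_2(\mathbb{Z})$-invariant ($\phi(h\gamma_1,h\gamma_2)=\phi(\gamma_1,\gamma_2)$) and satisfies $$\phi(\gamma_1,\gamma_2)+\phi(\gamma_2,\gamma_3)-\phi(\gamma_1,\gamma_3)=\delta(\gamma_1\ell_0,\gamma_2\ell_0,\gamma_3\ell_0)$$ for all $\gamma_1,\gamma_2,\gamma_3\in\mathrm{SL}_2(\mathbb{Z})$.
   Context: $S^1=(\mathbb{R}^2\setminus\{0\})/\mathbb{R}_+$ is the circle of rays in $\mathbb{R}^2$ (row vectors) with the standard orientation. $\ell_0$ is the ray $\mathbb{R}_+(-1,0)$, and $\gamma\in\mathrm{SL}_2(\mathbb{Z})$ acts on rays by $\mathbb{R}_+\nu\mapsto\mathbb{R}_+\nu\gamma^{-1}$. For rays $\ell_1,\ell_2,\ell_3$, $\delta(\ell_1,\ell_2,\ell_3)=0$ if $\ell_2$ lies on the closed counterclockwise arc from $\ell_1$ to $\ell_3$ (endpoints included), and $\delta(\ell_1,\ell_2,\ell_3)=1$ otherwise. *)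

theory Defs
  imports "HOL-Analysis.Analysis"
begin

definition SL2 :: "(int^2^2) set" where
  "SL2 = {g. det g = 1}"

definition sl2_inv :: "int^2^2 \<Rightarrow> int^2^2" where
  "sl2_inv g = (\<chi> i j. if i = 1 \<and> j = 1 then g$2$2
                        else if i = 1 \<and> j = 2 then - g$1$2
                        else if i = 2 \<and> j = 1 then - g$2$1
                        else g$1$1)"

text \<open>Rays are represented by nonzero row vectors in R^2 (rays = positive multiples).
  The action: R_+ nu |-> R_+ (nu g^{-1}).\<close>
definition ray_act :: "int^2^2 \<Rightarrow> real^2 \<Rightarrow> real^2" where
  "ray_act g \<nu> = \<nu> v* (map_matrix real_of_int (sl2_inv g))"

definition ell0 :: "real^2" where
  "ell0 = vector [-1, 0]"

definition to_cpx :: "real^2 \<Rightarrow> complex" where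
  "to_cpx v = Complex (v$1) (v$2)"

definition ccw_angle :: "real^2 \<Rightarrow> real^2 \<Rightarrow> real" where
  "ccw_angle u v = (let a = Arg (to_cpx v / to_cpx u) in if 0 \<le> a then a else a + 2 * pi)"

definition delta :: "real^2 \<Rightarrow> real^2 \<Rightarrow> real^2 \<Rightarrow> real" where
  "delta l1 l2 l3 = (if ccw_angle l1 l2 \<le> ccw_angle l1 l3 then 0 else 1)"

definition phi_prop :: "(int^2^2 \<Rightarrow> int^2^2 \<Rightarrow> real) \<Rightarrow> bool" where
  "phi_prop \<phi> \<longleftrightarrow>
     (\<forall>g1\<in>SL2. \<forall>g2\<in>SL2. \<exists>k::int. \<phi> g1 g2 = of_int k / 12) \<and>
     (\<forall>h\<in>SL2. \<forall>g1\<in>SL2. \<forall>g2\<in>SL2. \<phi> (h ** g1) (h ** g2) = \<phi> g1 g2) \<and>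
     (\<forall>g1\<in>SL2. \<forall>g2\<in>SL2. \<forall>g3\<in>SL2.
        \<phi> g1 g2 + \<phi> g2 g3 - \<phi> g1 g3
          = delta (ray_act g1 ell0) (ray_act g2 ell0) (ray_act g3 ell0))"

end

theory Submission imports Defs begin

lemma abs_mod_lt: "(b::int) \<noteq> 0 \<Longrightarrow> \<bar>a mod b\<bar> < \<bar>b\<bar>"
  by (metis abs_mod_less)

function f :: "int \<Rightarrow> int \<Rightarrow> int \<Rightarrow> int \<Rightarrow> int" where
  "f a b c d = (if b = 0 then (if a = 1 then c else 6 - c)
     else f (-b) (a mod b) (-d) (c - (a div b) * d) + 3 + a div b)"
  by auto
termination
  by (relation "Wellfounded.measure (\<lambda>(a,b,c,d). nat \<bar>b\<bar>)") (auto simp: abs_mod_lt)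

declare f.simps[simp del]

lemma f_b0: "f a 0 c d = (if a = 1 then c else 6 - c)"
  by (simp add: f.simps)

lemma f_bnz: "b \<noteq> 0 \<Longrightarrow> f a b c d = f (-b) (a mod b) (-d) (c - (a div b) * d) + 3 + a div b"
  by (subst f.simps) simp

lemma det_b0: "a * d - 0 * (c::int) = 1 \<Longrightarrow> (a = 1 \<and> d = 1) \<or> (a = -1 \<and> d = -1)"
  using zmult_eq_1_iff by auto

lemma fU: assumes "a * d - b * c = 1" shows "f (a + b) b (c + d) d = f a b c d + 1"
proof (cases "b = 0")
  case True
  then show ?thesis using det_b0[of a d c] assms by (auto simp: f_b0)
next
  case False
  have q: "(a + b) div b = a div b + 1" using False by simp
  have r: "(a + b) mod b = a mod b" by simp
  show ?thesis using False
    by (simp add: f_bnz[of b] q r algebra_simps)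
qed

lemma det_step: "a * d - b * c = (1::int) \<Longrightarrow> b \<noteq> 0 \<Longrightarrow>
   (-b) * (c - (a div b) * d) - (a mod b) * (-d) = 1"
proof -
  assume h: "a * d - b * c = 1" "b \<noteq> 0"
  have e: "a mod b = a - b * (a div b)" by (simp add: minus_div_mult_eq_mod[symmetric] mult.commute)
  have "(-b) * (c - (a div b) * d) - (a mod b) * (-d) = a * d - b * c"
    unfolding e by (simp add: algebra_simps)
  then show ?thesis using h by simp
qed

definition Nind :: "int \<Rightarrow> int \<Rightarrow> int" where
  "Nind a b = (if b > 0 \<or> (b = 0 \<and> a = -1) then 1 else 0)"

lemma fN: "a * d - b * c = 1 \<Longrightarrow> f (-a) (-b) (-c) (-d) = f a b c d + 6 - 12 * Nind a b"
proof (induction a b c d rule: f.induct)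
  case (1 a b c d)
  show ?case
  proof (cases "b = 0")
    case True
    then show ?thesis using det_b0[of a d c] 1(2) by (auto simp: f_b0 Nind_def)
  next
    case False
    define q where "q = a div b"
    define r where "r = a mod b"
    have IH: "f (- (- b)) (- (a mod b)) (- (- d)) (- (c - a div b * d)) =
      f (- b) (a mod b) (- d) (c - a div b * d) + 6 - 12 * Nind (- b) (a mod b)"
      using 1(1)[OF False det_step[OF 1(2) False]] .
    have e1: "(-a) div (-b) = q" by (simp add: q_def)
    have e2: "(-a) mod (-b) = - r" by (simp add: r_def)
    have lhs: "f (-a) (-b) (-c) (-d) = f b (-r) d (-(c - q * d)) + 3 + q"
      using False f_bnz[of "-b" "-a" "-c" "-d"] e1 e2 by simp
    have rhs: "f a b c d = f (-b) r (-d) (c - q*d) + 3 + q"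
      using False f_bnz[of b a c d] by (simp add: q_def r_def)
    have ind: "Nind (-b) r = Nind a b"
    proof (cases "b > 0")
      case True
      have "r \<ge> 0" using True by (simp add: r_def)
      moreover have "r = 0 \<Longrightarrow> b = 1"
      proof -
        assume "r = 0"
        then have "b dvd a" by (simp add: r_def dvd_eq_mod_eq_0)
        then have "b dvd a * d - b * c" by simp
        then have "b dvd 1" using 1(2) by simp
        then show "b = 1" using True by simp
      qed
      ultimately show ?thesis using True by (auto simp: Nind_def)
    next
      case False
      then have "b < 0" using \<open>b \<noteq> 0\<close> by simp
      then have "r \<le> 0" by (simp add: r_def)
      then show ?thesis using \<open>b < 0\<close> by (auto simp: Nind_def)
    qed
    show ?thesis using IH lhs rhs ind by (simp add: q_def r_def)
  qed
qed

definition Sind :: "int \<Rightarrow> int \<Rightarrow> int" where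
  "Sind a b = (if a \<ge> 0 \<and> b > 0 then 1 else 0)"

definition SR :: "int \<Rightarrow> int \<Rightarrow> int \<Rightarrow> int \<Rightarrow> bool" where
  "SR a b c d \<longleftrightarrow> f b (-a) d (-c) = f a b c d + 3 - 12 * Sind a b"

lemma fS_red: assumes "a \<noteq> 0" "b mod (-a) = b" shows "f b (-a) d (-c) = f a b c d + 3"
proof -
  have q: "b div (-a) = 0"
  proof -
    have "b = (-a) * (b div (-a)) + b mod (-a)" using div_mult_mod_eq[of b "-a"] by (simp add: mult.commute)
    then have "(-a) * (b div (-a)) = 0" using assms(2) by simp
    then show ?thesis using assms(1) by simp
  qed
  show ?thesis using assms f_bnz[of "-a" b d "-c"] q by simp
qed

lemma SR_orbit: assumes "a * d - b * c = 1" "SR a b c d" shows "SR b (-a) d (-c)"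
proof -
  have n: "f (-a) (-b) (-c) (-d) = f a b c d + 6 - 12 * Nind a b" using fN assms(1) .
  have ab: "a \<noteq> 0 \<or> b \<noteq> 0" using assms(1) by auto
  have b0: "b = 0 \<Longrightarrow> a = 1 \<or> a = -1" using assms(1) det_b0[of a d c] by auto
  have "Nind a b = Sind a b + Sind b (-a)"
    using b0 by (auto simp: Nind_def Sind_def)
  then show ?thesis using assms(2) n unfolding SR_def by simp
qed

lemma SR_back: assumes "a * d - b * c = 1" "SR b (-a) d (-c)" shows "SR a b c d"
proof -
  have d1: "b * (-c) - (-a) * d = 1" using assms(1) by simp
  have "SR (-a) (-b) (-c) (-d)" using SR_orbit[OF d1 assms(2)] by simp
  moreover have d2: "(-a) * (-d) - (-b) * (-c) = 1" using assms(1) by simp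
  ultimately have "SR (-b) a (-d) c" using SR_orbit[OF d2] by simp
  moreover have d3: "(-b) * c - a * (-d) = 1" using assms(1) by simp
  ultimately show ?thesis using SR_orbit[OF d3] by simp
qed

lemma SR_case1:
  assumes det: "a * d - b * c = 1" and a: "a > 0" and b: "b \<ge> 0"
    and m: "\<bar>a\<bar> + \<bar>b\<bar> = m"
    and IH: "\<And>a' b' c' d'. \<bar>a'\<bar> + \<bar>b'\<bar> < m \<Longrightarrow> a' * d' - b' * c' = 1 \<Longrightarrow> SR a' b' c' d'"
  shows "SR a b c d"
proof -
  consider "b = 0" | "0 < b \<and> b \<le> a" | "a < b" using b by linarith
  then show ?thesis
  proof cases
    case 1
    then show ?thesis using fS_red[of a 0 d c] a by (simp add: SR_def Sind_def)
  next
    case 2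
    have d': "(a - b) * d - b * (c - d) = 1" using det by (simp add: algebra_simps)
    have ih: "SR (a - b) b (c - d) d" using IH[OF _ d'] 2 a m by simp
    then have s1: "f b (b - a) d (d - c) = f (a - b) b (c - d) d - 9"
      using 2 by (simp add: SR_def Sind_def)
    have dy: "a * (d - c) - (b - a) * c = 1" using det by (simp add: algebra_simps)
    have s2: "f b (b - a) d (d - c) = f a (b - a) c (d - c) + 1"
      using fU[OF dy] by simp
    have red: "(b - a) mod (-a) = b - a"
      using 2 a by (simp add: mod_pos_neg_trivial)
    have s3: "f (b - a) (-a) (d - c) (-c) = f a (b - a) c (d - c) + 3"
      using fS_red[OF _ red, of "d - c" c] a by simp
    have dxs: "b * (-c) - (-a) * d = 1" using det by simp
    have s4: "f (b - a) (-a) (d - c) (-c) = f b (-a) d (-c) + 1"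
      using fU[OF dxs] by simp
    have s5: "f a b c d = f (a - b) b (c - d) d + 1"
      using fU[OF d'] by simp
    show ?thesis using s1 s2 s3 s4 s5 2 by (simp add: SR_def Sind_def)
  next
    case 3
    have dz: "(-b) * c - a * (-d) = 1" using det by (simp add: algebra_simps)
    have red: "a mod b = a" using 3 a by simp
    have "f a (- (-b)) c (- (-d)) = f (-b) a (-d) c + 3"
      using fS_red[of "-b" a c "-d"] red 3 a by simp
    then have "SR (-b) a (-d) c" using 3 by (simp add: SR_def Sind_def)
    then show ?thesis using SR_orbit[OF dz] by simp
  qed
qed

lemma SR_all: "a * d - b * c = 1 \<Longrightarrow> SR a b c d"
proof (induction "nat (\<bar>a\<bar> + \<bar>b\<bar>)" arbitrary: a b c d rule: less_induct)
  case less
  define m where "m = \<bar>a\<bar> + \<bar>b\<bar>"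
  have IH: "\<And>a' b' c' d'. \<bar>a'\<bar> + \<bar>b'\<bar> < m \<Longrightarrow> a' * d' - b' * c' = 1 \<Longrightarrow> SR a' b' c' d'"
  proof -
    fix a' b' c' d' assume h: "\<bar>a'\<bar> + \<bar>b'\<bar> < m" "a' * d' - b' * c' = 1"
    have "nat (\<bar>a'\<bar> + \<bar>b'\<bar>) < nat (\<bar>a\<bar> + \<bar>b\<bar>)"
      using h(1) unfolding m_def by simp
    from less(1)[OF this h(2)] show "SR a' b' c' d'" .
  qed
  note det = less(2)
  have nz: "a \<noteq> 0 \<or> b \<noteq> 0" using det by auto
  consider "a > 0 \<and> b \<ge> 0" | "a \<le> 0 \<and> b > 0" | "a < 0 \<and> b \<le> 0" | "a \<ge> 0 \<and> b < 0"
    using nz by atomize_elim auto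
  then show ?case
  proof cases
    case 1
    show ?thesis by (rule SR_case1[OF det _ _ m_def[symmetric] IH]) (use 1 in auto)
  next
    case 2
    have d1: "b * (-c) - (-a) * d = 1" using det by simp
    have "SR b (-a) d (-c)" by (rule SR_case1[OF d1 _ _ _ IH]) (use 2 in \<open>auto simp: m_def\<close>)
    then show ?thesis using SR_back[OF det] by simp
  next
    case 3
    have d1: "(-a) * (-d) - (-b) * (-c) = 1" using det by simp
    have "SR (-a) (-b) (-c) (-d)" by (rule SR_case1[OF d1 _ _ _ IH]) (use 3 in \<open>auto simp: m_def\<close>)
    have d2: "(-b) * c - a * (-d) = 1" using det by (simp add: algebra_simps)
    have "SR (-b) a (-d) c" using SR_orbit[OF d1 \<open>SR (-a) (-b) (-c) (-d)\<close>] by simp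
    then show ?thesis using SR_orbit[OF d2] by simp
  next
    case 4
    have d1: "(-b) * c - a * (-d) = 1" using det by (simp add: algebra_simps)
    have "SR (-b) a (-d) c" by (rule SR_case1[OF d1 _ _ _ IH]) (use 4 in \<open>auto simp: m_def\<close>)
    then show ?thesis using SR_orbit[OF d1] by simp
  qed
qed

section \<open>Matrices\<close>

definition mat2 :: "'a::zero \<Rightarrow> 'a \<Rightarrow> 'a \<Rightarrow> 'a \<Rightarrow> 'a^2^2" where
  "mat2 a b c d = (\<chi> i j. if i = 1 then (if j = 1 then a else b) else (if j = 1 then c else d))"

lemma two_ne_one[simp]: "(2::2) \<noteq> 1"
  by simp

lemma mat2_nth[simp]: "mat2 a b c d $ 1 $ 1 = a" "mat2 a b c d $ 1 $ 2 = b"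
  "mat2 a b c d $ 2 $ 1 = c" "mat2 a b c d $ 2 $ 2 = d"
  by (simp_all add: mat2_def)

lemma mat2_eta: "M = mat2 (M$1$1) (M$1$2) (M$2$1) (M$2$2)"
  by (simp add: vec_eq_iff forall_2)

lemma mat2_eq_iff: "mat2 a b c d = mat2 a' b' c' d' \<longleftrightarrow> a = a' \<and> b = b' \<and> c = c' \<and> d = d'"
  by (auto simp: vec_eq_iff forall_2)

lemma mat2_mult: "mat2 a b c d ** mat2 x y z w =
   mat2 (a*x+b*z) (a*y+b*w) (c*x+d*z) (c*y+(d::'a::semiring_1)*w)"
  by (simp add: vec_eq_iff forall_2 matrix_matrix_mult_def sum_2)

lemma det_mat2: "det (mat2 a b c d) = a * d - b * (c::'a::comm_ring_1)"
  by (simp add: det_2)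

lemma sl2_inv_mat2: "sl2_inv (mat2 a b c d) = mat2 d (-b) (-c) a"
  by (simp add: sl2_inv_def vec_eq_iff forall_2)

definition Sm :: "int^2^2" where "Sm = mat2 0 (-1) 1 0"
definition Um :: "int^2^2" where "Um = mat2 1 0 1 1"
definition Id2 :: "int^2^2" where "Id2 = mat2 1 0 0 1"

lemma Id2_mat: "Id2 = mat 1"
  by (simp add: Id2_def vec_eq_iff forall_2 mat_def)

inductive_set gen :: "(int^2^2) set" where
  gen_I: "Id2 \<in> gen"
| gen_S: "g \<in> gen \<Longrightarrow> g ** Sm \<in> gen"
| gen_U: "g \<in> gen \<Longrightarrow> g ** Um \<in> gen"

lemma gen_Uinv: assumes "g \<in> gen" shows "g ** mat2 1 0 (-1) 1 \<in> gen"
proof -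
  have "g ** Sm ** Um ** Sm ** Um ** Sm \<in> gen" using assms by (intro gen.intros)
  moreover have "g ** Sm ** Um ** Sm ** Um ** Sm = g ** mat2 1 0 (-1) 1"
    by (simp add: Sm_def Um_def matrix_mul_assoc[symmetric] mat2_mult)
  ultimately show ?thesis by simp
qed

lemma gen_Upow: assumes "g \<in> gen" shows "g ** mat2 1 0 n 1 \<in> gen"
proof (induction n rule: int_induct[where k=0])
  case base
  have "mat2 1 0 0 (1::int) = mat 1" using Id2_mat by (simp add: Id2_def)
  then show ?case using assms by simp
next
  case (step1 i)
  have "g ** mat2 1 0 i 1 ** Um \<in> gen" using step1 by (intro gen.intros)
  then show ?case by (simp add: Um_def matrix_mul_assoc[symmetric] mat2_mult)
next
  case (step2 i)
  have "g ** mat2 1 0 i 1 ** mat2 1 0 (-1) 1 \<in> gen" using step2 by (intro gen_Uinv)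
  then show ?case by (simp add: matrix_mul_assoc[symmetric] mat2_mult)
qed

lemma SL2_gen: "det g = 1 \<Longrightarrow> g \<in> gen"
proof (induction "nat \<bar>g$1$2\<bar>" arbitrary: g rule: less_induct)
  case less
  obtain a b c d where g: "g = mat2 a b c d" using mat2_eta by blast
  have det: "a * d - b * c = 1" using less(2) g by (simp add: det_mat2)
  show ?case
  proof (cases "b = 0")
    case True
    then consider "a = 1 \<and> d = 1" | "a = -1 \<and> d = -1" using det_b0[of a d c] det by auto
    then show ?thesis
    proof cases
      case 1
      have "Id2 ** mat2 1 0 c 1 \<in> gen" by (intro gen_Upow gen_I)
      then show ?thesis using 1 True g by (simp add: Id2_def mat2_mult)
    next
      case 2
      have "Id2 ** Sm ** Sm ** mat2 1 0 (-c) 1 \<in> gen" by (intro gen_Upow gen.intros)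
      then show ?thesis using 2 True g by (simp add: Id2_def Sm_def mat2_mult)
    qed
  next
    case False
    define g2 where "g2 = mat2 (-b) (a mod b) (-d) (c - (a div b) * d)"
    have "det g2 = 1" using det_step[OF det False] by (simp add: g2_def det_mat2)
    moreover have "nat \<bar>g2$1$2\<bar> < nat \<bar>g$1$2\<bar>" using False g abs_mod_lt[OF False, of a]
      by (simp add: g2_def)
    ultimately have "g2 \<in> gen" using less(1) by blast
    then have "g2 ** Sm ** mat2 1 0 (a div b) 1 \<in> gen" by (intro gen_Upow gen.intros)
    moreover have "g2 ** Sm ** mat2 1 0 (a div b) 1 = g"
    proof -
      have "a mod b + a div b * b = a" by simp
      then show ?thesis by (simp add: g g2_def Sm_def mat2_mult algebra_simps)
    qed
    ultimately show ?thesis by simp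
  qed
qed

lemma gen_SL2: "g \<in> gen \<Longrightarrow> det g = 1"
proof (induction rule: gen.induct)
  case gen_I then show ?case by (simp add: Id2_def det_mat2)
next
  case (gen_S g) then show ?case by (simp add: det_mul Sm_def det_mat2)
next
  case (gen_U g) then show ?case by (simp add: det_mul Um_def det_mat2)
qed



lemma Arg2pi_Arg: "Arg2pi z = (if 0 \<le> Arg z then Arg z else Arg z + 2 * pi)"
proof (cases "z = 0")
  case True then show ?thesis by (simp add: Arg_zero)
next
  case False
  show ?thesis
  proof (rule Arg2pi_unique[of "norm z"])
    have "exp (\<i> * complex_of_real (Arg z + 2 * pi)) = exp (\<i> * complex_of_real (Arg z))"
      by (simp add: algebra_simps exp_add)
    then show "complex_of_real (cmod z) * exp (\<i> * complex_of_real (if 0 \<le> Arg z then Arg z else Arg z + 2 * pi)) = z"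
      using Arg_eq[OF False] by auto
    show "0 < cmod z" using False by simp
    show "0 \<le> (if 0 \<le> Arg z then Arg z else Arg z + 2 * pi)"
      using mpi_less_Arg[of z] by auto
    show "(if 0 \<le> Arg z then Arg z else Arg z + 2 * pi) < 2 * pi"
      using Arg_le_pi[of z] pi_gt_zero by (smt (verit))
  qed
qed

lemma ccw_Arg2pi: "ccw_angle u v = Arg2pi (to_cpx v / to_cpx u)"
  by (simp add: ccw_angle_def Arg2pi_Arg Let_def)

lemma Arg2pi_div:
  assumes "w1 \<noteq> 0" "w2 \<noteq> 0"
  shows "Arg2pi (w2 / w1) = (if Arg2pi w1 \<le> Arg2pi w2 then Arg2pi w2 - Arg2pi w1
                               else Arg2pi w2 - Arg2pi w1 + 2 * pi)"
proof (rule Arg2pi_unique[of "norm w2 / norm w1"])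
  define t where "t = (if Arg2pi w1 \<le> Arg2pi w2 then Arg2pi w2 - Arg2pi w1
                               else Arg2pi w2 - Arg2pi w1 + 2 * pi)"
  have e: "exp (\<i> * complex_of_real t) = exp (\<i> * complex_of_real (Arg2pi w2)) / exp (\<i> * complex_of_real (Arg2pi w1))"
    by (simp add: t_def algebra_simps exp_add exp_diff)
  have "w2 / w1 = (complex_of_real (cmod w2) * exp (\<i> * complex_of_real (Arg2pi w2))) /
                  (complex_of_real (cmod w1) * exp (\<i> * complex_of_real (Arg2pi w1)))"
    using Arg2pi_eq[of w1] Arg2pi_eq[of w2] by simp
  also have "\<dots> = complex_of_real (cmod w2 / cmod w1) * exp (\<i> * complex_of_real t)"
    unfolding e by (simp add: field_simps)
  finally show "complex_of_real (cmod w2 / cmod w1) * exp (\<i> * complex_of_real t) = w2 / w1" by simp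
  show "0 < cmod w2 / cmod w1" using assms by simp
  show "0 \<le> t" "t < 2 * pi" using Arg2pi_ge_0[of w1] Arg2pi_lt_2pi[of w1]
      Arg2pi_ge_0[of w2] Arg2pi_lt_2pi[of w2] by (auto simp: t_def)
qed

lemma Im_cnj_mult: "Re w1 * Im w2 - Im w1 * Re w2 = cmod w1 * cmod w2 * sin (Arg2pi w2 - Arg2pi w1)"
proof -
  have "Re w1 * Im w2 - Im w1 * Re w2 =
     (cmod w1 * cos (Arg2pi w1)) * (cmod w2 * sin (Arg2pi w2)) - (cmod w1 * sin (Arg2pi w1)) * (cmod w2 * cos (Arg2pi w2))"
    by (simp add: cos_Arg2pi sin_Arg2pi)
  also have "\<dots> = cmod w1 * cmod w2 * sin (Arg2pi w2 - Arg2pi w1)"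
    by (simp add: sin_diff algebra_simps)
  finally show ?thesis .
qed

definition cl :: "real \<Rightarrow> real \<Rightarrow> nat" where
  "cl x y = (if y = 0 \<and> x > 0 then 0 else if y > 0 then 1 else if y = 0 then 2 else 3)"

lemma cl_range:
  assumes "z \<noteq> 0"
  shows "cl (Re z) (Im z) = 0 \<longleftrightarrow> Arg2pi z = 0"
    and "cl (Re z) (Im z) = 1 \<longleftrightarrow> 0 < Arg2pi z \<and> Arg2pi z < pi"
    and "cl (Re z) (Im z) = 2 \<longleftrightarrow> Arg2pi z = pi"
    and "cl (Re z) (Im z) = 3 \<longleftrightarrow> pi < Arg2pi z"
proof -
  have a0: "Arg2pi z = 0 \<longleftrightarrow> Im z = 0 \<and> Re z > 0"
    using Arg2pi_eq_0[of z] assms by (auto simp: complex_is_Real_iff complex_eq_iff)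
  have a1: "0 < Arg2pi z \<and> Arg2pi z < pi \<longleftrightarrow> 0 < Im z" by (rule Arg2pi_lt_pi)
  have a2: "Arg2pi z = pi \<longleftrightarrow> Im z = 0 \<and> Re z < 0"
    using Arg2pi_eq_pi[of z] by (auto simp: complex_is_Real_iff)
  have a3: "Arg2pi z \<le> pi \<longleftrightarrow> 0 \<le> Im z" by (rule Arg2pi_le_pi)
  have nz: "Im z = 0 \<Longrightarrow> Re z \<noteq> 0" using assms by (auto simp: complex_eq_iff)
  show "cl (Re z) (Im z) = 0 \<longleftrightarrow> Arg2pi z = 0" using a0 by (auto simp: cl_def)
  show "cl (Re z) (Im z) = 1 \<longleftrightarrow> 0 < Arg2pi z \<and> Arg2pi z < pi" using a1 by (auto simp: cl_def)
  show "cl (Re z) (Im z) = 2 \<longleftrightarrow> Arg2pi z = pi" using a2 nz by (auto simp: cl_def)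
  show "cl (Re z) (Im z) = 3 \<longleftrightarrow> pi < Arg2pi z" using a3 by (auto simp: cl_def)
qed

lemma cl_le3: "cl x y \<le> 3" by (simp add: cl_def)

lemma sin_sign: "-pi < x \<Longrightarrow> x < pi \<Longrightarrow> 0 \<le> sin x \<longleftrightarrow> 0 \<le> x"
proof
  assume h: "-pi < x" "x < pi" "0 \<le> sin x"
  show "0 \<le> x"
  proof (rule ccontr)
    assume "\<not> 0 \<le> x"
    then have "0 < sin (-x)" using h by (intro sin_gt_zero) auto
    then show False using h by simp
  qed
next
  assume "-pi < x" "x < pi" "0 \<le> x"
  then show "0 \<le> sin x" by (intro sin_ge_zero) auto
qed

lemma cl_mono:
  assumes "z1 \<noteq> 0" "z2 \<noteq> 0" "cl (Re z1) (Im z1) < cl (Re z2) (Im z2)"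
  shows "Arg2pi z1 < Arg2pi z2"
proof -
  note r1 = cl_range[OF assms(1)] and r2 = cl_range[OF assms(2)]
  have pp: "0 < pi" by (rule pi_gt_zero)
  have b1: "Arg2pi z1 < 2*pi" "0 \<le> Arg2pi z2" by (rule Arg2pi_lt_2pi, rule Arg2pi_ge_0)
  have c1: "cl (Re z1) (Im z1) \<le> 3" "cl (Re z2) (Im z2) \<le> 3" by (rule cl_le3)+
  consider "cl (Re z1) (Im z1) = 0" | "cl (Re z1) (Im z1) = 1" | "cl (Re z1) (Im z1) = 2"
    using c1 assms(3) by linarith
  then show ?thesis
  proof cases
    case 1
    then have "Arg2pi z1 = 0" using r1 by simp
    moreover have "cl (Re z2) (Im z2) = 1 \<or> cl (Re z2) (Im z2) = 2 \<or> cl (Re z2) (Im z2) = 3"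
      using 1 c1 assms(3) by linarith
    ultimately show ?thesis using r2 pp by (smt (verit))
  next
    case 2
    then have "0 < Arg2pi z1 \<and> Arg2pi z1 < pi" using r1 by simp
    moreover have "cl (Re z2) (Im z2) = 2 \<or> cl (Re z2) (Im z2) = 3"
      using 2 c1 assms(3) by linarith
    ultimately show ?thesis using r2 pp by (smt (verit))
  next
    case 3
    then have "Arg2pi z1 = pi" using r1 by simp
    moreover have "cl (Re z2) (Im z2) = 3"
      using 3 c1 assms(3) by linarith
    ultimately show ?thesis using r2 pp by (smt (verit))
  qed
qed

lemma ORD:
  assumes "z1 \<noteq> 0" "z2 \<noteq> 0"
  shows "Arg2pi z1 \<le> Arg2pi z2 \<longleftrightarrow>
    cl (Re z1) (Im z1) < cl (Re z2) (Im z2) \<or>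
    (cl (Re z1) (Im z1) = cl (Re z2) (Im z2) \<and> 0 \<le> Re z1 * Im z2 - Im z1 * Re z2)"
proof -
  note r1 = cl_range[OF assms(1)] and r2 = cl_range[OF assms(2)]
  have b1: "0 \<le> Arg2pi z1" "Arg2pi z1 < 2*pi" by (rule Arg2pi_ge_0, rule Arg2pi_lt_2pi)
  have b2: "0 \<le> Arg2pi z2" "Arg2pi z2 < 2*pi" by (rule Arg2pi_ge_0, rule Arg2pi_lt_2pi)
  have cr: "Re z1 * Im z2 - Im z1 * Re z2 = cmod z1 * cmod z2 * sin (Arg2pi z2 - Arg2pi z1)"
    by (rule Im_cnj_mult)
  have np: "0 < cmod z1 * cmod z2" using assms by simp
  have crs: "0 \<le> Re z1 * Im z2 - Im z1 * Re z2 \<longleftrightarrow> 0 \<le> sin (Arg2pi z2 - Arg2pi z1)"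
    unfolding cr using np by (simp add: zero_le_mult_iff)
  have c1: "cl (Re z1) (Im z1) \<le> 3" "cl (Re z2) (Im z2) \<le> 3" by (rule cl_le3)+
  consider "cl (Re z1) (Im z1) = 0" | "cl (Re z1) (Im z1) = 1" | "cl (Re z1) (Im z1) = 2" | "cl (Re z1) (Im z1) = 3"
    using c1 by linarith
  note cs1 = this
  consider "cl (Re z2) (Im z2) = 0" | "cl (Re z2) (Im z2) = 1" | "cl (Re z2) (Im z2) = 2" | "cl (Re z2) (Im z2) = 3"
    using c1 by linarith
  show ?thesis
  proof (cases "cl (Re z1) (Im z1) = cl (Re z2) (Im z2)")
    case False
    then consider "cl (Re z1) (Im z1) < cl (Re z2) (Im z2)" | "cl (Re z2) (Im z2) < cl (Re z1) (Im z1)"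
      by linarith
    then show ?thesis
    proof cases
      case 1 then show ?thesis using cl_mono[OF assms] by auto
    next
      case 2 then show ?thesis using cl_mono[OF assms(2,1)] by auto
    qed
  next
    case eq: True
    show ?thesis
    proof (cases rule: cs1)
      assume h: "cl (Re z1) (Im z1) = 1"
      then have "0 < Arg2pi z1" "Arg2pi z1 < pi" "0 < Arg2pi z2" "Arg2pi z2 < pi" using r1 r2 eq by auto
      then have "0 \<le> sin (Arg2pi z2 - Arg2pi z1) \<longleftrightarrow> 0 \<le> Arg2pi z2 - Arg2pi z1"
        by (intro sin_sign) auto
      then show ?thesis using crs eq by auto
    next
      assume h: "cl (Re z1) (Im z1) = 3"
      then have "pi < Arg2pi z1" "pi < Arg2pi z2" using r1 r2 eq by auto
      then have "0 \<le> sin (Arg2pi z2 - Arg2pi z1) \<longleftrightarrow> 0 \<le> Arg2pi z2 - Arg2pi z1"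
        using b1 b2 by (intro sin_sign) auto
      then show ?thesis using crs eq by auto
    next
      assume h: "cl (Re z1) (Im z1) = 0"
      then show ?thesis using r1 r2 eq by (auto simp: cl_def split: if_splits)
    next
      assume h: "cl (Re z1) (Im z1) = 2"
      then show ?thesis using r1 r2 eq by (auto simp: cl_def split: if_splits)
    qed
  qed
qed

definition cross :: "real^2 \<Rightarrow> real^2 \<Rightarrow> real" where
  "cross u v = u$1 * v$2 - u$2 * v$1"
definition dot2 :: "real^2 \<Rightarrow> real^2 \<Rightarrow> real" where
  "dot2 u v = u$1 * v$1 + u$2 * v$2"

lemma to_cpx_eq0: "to_cpx v = 0 \<longleftrightarrow> v = 0"
  by (auto simp: to_cpx_def complex_eq_iff vec_eq_iff forall_2)

lemma cl_scale: "0 < n \<Longrightarrow> cl (x / n) (y / n) = cl x y"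
  by (simp add: cl_def divide_pos_pos divide_less_0_iff zero_less_divide_iff)

lemma delta_comb:
  assumes "u \<noteq> 0" "v \<noteq> 0" "w \<noteq> 0"
  shows "delta u v w = (if cl (dot2 u v) (cross u v) < cl (dot2 u w) (cross u w) \<or>
      (cl (dot2 u v) (cross u v) = cl (dot2 u w) (cross u w) \<and> 0 \<le> cross v w) then 0 else 1)"
proof -
  define n where "n = u$1 * u$1 + u$2 * u$2"
  have n0: "0 < n"
  proof -
    have "u$1 \<noteq> 0 \<or> u$2 \<noteq> 0" using assms(1) by (auto simp: vec_eq_iff forall_2)
    then show ?thesis unfolding n_def by (simp add: sum_squares_gt_zero_iff)
  qed
  have zu: "to_cpx u \<noteq> 0" "to_cpx v \<noteq> 0" "to_cpx w \<noteq> 0" using assms to_cpx_eq0 by auto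
  have zv: "to_cpx v / to_cpx u \<noteq> 0" "to_cpx w / to_cpx u \<noteq> 0" using zu by auto
  have re: "\<And>x. Re (to_cpx x / to_cpx u) = dot2 u x / n" "\<And>x. Im (to_cpx x / to_cpx u) = cross u x / n"
    by (simp_all add: to_cpx_def Re_divide Im_divide n_def dot2_def cross_def power2_eq_square algebra_simps)
  have crs: "dot2 u v / n * (cross u w / n) - cross u v / n * (dot2 u w / n) = cross v w / n"
  proof -
    have "dot2 u v * cross u w - cross u v * dot2 u w = n * cross v w"
      by (simp add: dot2_def cross_def n_def algebra_simps)
    then show ?thesis using n0 by (simp add: field_simps)
  qed
  have "0 \<le> cross v w / n \<longleftrightarrow> 0 \<le> cross v w" using n0 by (simp add: zero_le_divide_iff)
  then show ?thesis
    unfolding delta_def ccw_Arg2pi ORD[OF zv] re crs cl_scale[OF n0] by simp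
qed

lemma ray_act_nth: "ray_act g v $ 1 = v$1 * of_int (g$2$2) - v$2 * of_int (g$2$1)"
    "ray_act g v $ 2 = - v$1 * of_int (g$1$2) + v$2 * of_int (g$1$1)"
  by (simp_all add: ray_act_def vector_matrix_mult_def sum_2 sl2_inv_def algebra_simps)

lemma ray_act_comp: "ray_act (g ** h) v = ray_act g (ray_act h v)"
  by (simp add: vec_eq_iff forall_2 ray_act_nth matrix_matrix_mult_def sum_2 algebra_simps)

lemma ray_act_nz: assumes "det g = 1" "v \<noteq> 0" shows "ray_act g v \<noteq> 0"
proof
  assume h: "ray_act g v = 0"
  define a where "a = real_of_int (g$1$1)"
  define b where "b = real_of_int (g$1$2)"
  define c where "c = real_of_int (g$2$1)"
  define d where "d = real_of_int (g$2$2)"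
  have dt: "a * d - b * c = 1" using assms(1) unfolding a_def b_def c_def d_def det_2
    by (metis of_int_1 of_int_diff of_int_mult)
  have e1: "v$1 * d - v$2 * c = 0" "- v$1 * b + v$2 * a = 0"
    using h by (simp_all add: vec_eq_iff forall_2 ray_act_nth a_def b_def c_def d_def)
  have "v$1 = v$1 * (a * d - b * c)" using dt by simp
  also have "\<dots> = a * (v$1 * d - v$2 * c) + c * (v$2 * a - v$1 * b)" by (simp add: algebra_simps)
  finally have "v$1 = 0" using e1 by simp
  have "v$2 = v$2 * (a * d - b * c)" using dt by simp
  also have "\<dots> = d * (v$2 * a - v$1 * b) + b * (v$1 * d - v$2 * c)" by (simp add: algebra_simps)
  finally have "v$2 = 0" using e1 by simp
  then show False using \<open>v$1 = 0\<close> assms(2) by (auto simp: vec_eq_iff forall_2)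
qed

lemma cross_act: "det g = 1 \<Longrightarrow> cross (ray_act g u) (ray_act g v) = cross u v"
proof -
  assume d: "det g = 1"
  have dr: "real_of_int (g$1$1) * real_of_int (g$2$2) - real_of_int (g$1$2) * real_of_int (g$2$1) = 1"
    using d unfolding det_2 by (metis of_int_1 of_int_diff of_int_mult)
  have "cross (ray_act g u) (ray_act g v) = cross u v * (real_of_int (g$1$1) * real_of_int (g$2$2) - real_of_int (g$1$2) * real_of_int (g$2$1))"
    by (simp add: cross_def ray_act_nth algebra_simps)
  then show ?thesis using dr by simp
qed

lemma parallel: assumes "u \<noteq> 0" "cross u v = 0" shows "\<exists>l. v = l *\<^sub>R u"
proof (cases "u$1 = 0")
  case True
  then have "u$2 \<noteq> 0" using assms(1) by (auto simp: vec_eq_iff forall_2)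
  then have "v$1 = 0" using assms(2) True by (simp add: cross_def)
  then have "v = (v$2 / u$2) *\<^sub>R u" using True \<open>u$2 \<noteq> 0\<close> by (simp add: vec_eq_iff forall_2)
  then show ?thesis by blast
next
  case False
  then have "v$2 = v$1 / u$1 * u$2" using assms(2) by (simp add: cross_def field_simps)
  then have "v = (v$1 / u$1) *\<^sub>R u" using False by (simp add: vec_eq_iff forall_2)
  then show ?thesis by blast
qed

lemma ray_act_scale: "ray_act g (l *\<^sub>R v) = l *\<^sub>R ray_act g v"
  by (simp add: vec_eq_iff forall_2 ray_act_nth algebra_simps)

lemma dot2_scale: "dot2 u (l *\<^sub>R u) = l * dot2 u u"
  by (simp add: dot2_def algebra_simps)

lemma dot2_self_pos: "u \<noteq> 0 \<Longrightarrow> 0 < dot2 u u"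
proof -
  assume "u \<noteq> 0"
  then have "u$1 \<noteq> 0 \<or> u$2 \<noteq> 0" by (auto simp: vec_eq_iff forall_2)
  then show ?thesis unfolding dot2_def by (simp add: sum_squares_gt_zero_iff)
qed

lemma cl_act:
  assumes "det g = 1" "u \<noteq> 0"
  shows "cl (dot2 (ray_act g u) (ray_act g v)) (cross (ray_act g u) (ray_act g v)) = cl (dot2 u v) (cross u v)"
proof (cases "cross u v = 0")
  case False
  then show ?thesis using cross_act[OF assms(1)] by (simp add: cl_def)
next
  case True
  obtain l where l: "v = l *\<^sub>R u" using parallel[OF assms(2) True] by blast
  have p1: "0 < dot2 u u" using dot2_self_pos[OF assms(2)] .
  have p2: "0 < dot2 (ray_act g u) (ray_act g u)" using dot2_self_pos[OF ray_act_nz[OF assms]] .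
  have c0: "cross (ray_act g u) (ray_act g v) = 0" using True cross_act[OF assms(1)] by simp
  have d1: "dot2 (ray_act g u) (ray_act g v) = l * dot2 (ray_act g u) (ray_act g u)"
    unfolding l ray_act_scale dot2_scale ..
  have d2: "dot2 u v = l * dot2 u u" unfolding l dot2_scale ..
  show ?thesis using p1 p2 unfolding c0 True d1 d2 by (simp add: cl_def zero_less_mult_iff)
qed

lemma delta_act:
  assumes "det g = 1" "u \<noteq> 0" "v \<noteq> 0" "w \<noteq> 0"
  shows "delta (ray_act g u) (ray_act g v) (ray_act g w) = delta u v w"
proof -
  have nz: "ray_act g u \<noteq> 0" "ray_act g v \<noteq> 0" "ray_act g w \<noteq> 0"
    using ray_act_nz[OF assms(1)] assms by auto
  show ?thesis
    unfolding delta_comb[OF nz] delta_comb[OF assms(2-4)]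
    by (simp only: cl_act[OF assms(1,2)], simp only: cross_act[OF assms(1)])
qed

lemma delta_same: "delta u v v = 0"
  by (simp add: delta_def)

lemma delta_cocycle:
  assumes "p \<noteq> 0" "q \<noteq> 0" "r \<noteq> 0" "s \<noteq> 0"
  shows "delta p q r + delta p r s - delta q r s = delta p q s"
proof -
  define zq where "zq = to_cpx q / to_cpx p"
  define zr where "zr = to_cpx r / to_cpx p"
  define zs where "zs = to_cpx s / to_cpx p"
  have nz: "zq \<noteq> 0" "zr \<noteq> 0" "zs \<noteq> 0" using assms to_cpx_eq0 by (auto simp: zq_def zr_def zs_def)
  have e1: "to_cpx r / to_cpx q = zr / zq" "to_cpx s / to_cpx q = zs / zq"
    using assms to_cpx_eq0 by (auto simp: zq_def zr_def zs_def field_simps)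
  have bq: "0 \<le> Arg2pi zq" "Arg2pi zq < 2*pi" by (rule Arg2pi_ge_0, rule Arg2pi_lt_2pi)
  have br: "0 \<le> Arg2pi zr" "Arg2pi zr < 2*pi" by (rule Arg2pi_ge_0, rule Arg2pi_lt_2pi)
  have bs: "0 \<le> Arg2pi zs" "Arg2pi zs < 2*pi" by (rule Arg2pi_ge_0, rule Arg2pi_lt_2pi)
  show ?thesis
    unfolding delta_def ccw_Arg2pi e1 Arg2pi_div[OF nz(1,2)] Arg2pi_div[OF nz(1,3)]
    unfolding zq_def[symmetric] zr_def[symmetric] zs_def[symmetric]
    using bq br bs by auto
qed


definition F :: "int^2^2 \<Rightarrow> real" where
  "F g = real_of_int (f (g$1$1) (g$1$2) (g$2$1) (g$2$2)) / 12"

definition cc :: "int^2^2 \<Rightarrow> int^2^2 \<Rightarrow> real" where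
  "cc a b = delta ell0 (ray_act a ell0) (ray_act (a ** b) ell0)"

lemma ell0_nz: "ell0 \<noteq> 0"
  by (simp add: ell0_def vec_eq_iff forall_2)

lemma ell0_nth[simp]: "ell0 $ 1 = -1" "ell0 $ 2 = 0"
  by (simp_all add: ell0_def)

lemma ray_ell0: "ray_act (mat2 p q r t) ell0 = vector [- of_int t, of_int q]"
  by (simp add: vec_eq_iff forall_2 ray_act_nth)

lemma det_b0_real: "p * t - 0 * r = (1::int) \<Longrightarrow> (p = 1 \<and> t = 1) \<or> (p = -1 \<and> t = -1)"
  using det_b0 by blast

lemma cc_S:
  assumes "p * t - q * r = 1"
  shows "cc (mat2 p q r t) Sm = real_of_int (Sind p q)"
proof -
  have ms: "mat2 p q r t ** Sm = mat2 q (-p) t (-r)" by (simp add: Sm_def mat2_mult)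
  have nz: "ell0 \<noteq> 0" "ray_act (mat2 p q r t) ell0 \<noteq> 0" "ray_act (mat2 q (-p) t (-r)) ell0 \<noteq> 0"
    using ell0_nz ray_act_nz assms by (auto simp: det_mat2)
  have q0: "q = 0 \<Longrightarrow> (p = 1 \<and> t = 1) \<or> (p = -1 \<and> t = -1)" using assms det_b0 by auto
  have p0: "p = 0 \<Longrightarrow> q * r = -1" using assms by simp
  have p0': "p = 0 \<Longrightarrow> (q > 0 \<and> r < 0) \<or> (q < 0 \<and> r > 0)"
  proof -
    assume "p = 0"
    then have "q * r < 0" using p0 by simp
    then show ?thesis by (auto simp: mult_less_0_iff)
  qed
  have cw: "cross (ray_act (mat2 p q r t) ell0) (ray_act (mat2 q (-p) t (-r)) ell0) = 1"
  proof -
    have "real_of_int (p * t - q * r) = 1" using assms by simp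
    then show ?thesis by (simp add: ray_ell0 cross_def algebra_simps)
  qed
  show ?thesis
    unfolding cc_def ms delta_comb[OF nz] cw
    using q0 p0'
    by (auto simp: ray_ell0 cross_def dot2_def cl_def Sind_def)
qed

lemma ray_Um: "ray_act Um ell0 = ell0"
  by (simp add: vec_eq_iff forall_2 ray_act_nth Um_def)

lemma cc_U: "cc a Um = 0"
  by (simp add: cc_def ray_act_comp ray_Um delta_same)

definition P :: "int^2^2 \<Rightarrow> bool" where
  "P b \<longleftrightarrow> (\<forall>a. det a = 1 \<longrightarrow> F a + F b - F (a ** b) = cc a b)"

lemma F_mat2: "F (mat2 p q r t) = real_of_int (f p q r t) / 12"
  by (simp add: F_def)

lemma P_S: "P Sm"
  unfolding P_def
proof (intro allI impI)
  fix a :: "int^2^2" assume d: "det a = 1"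
  obtain p q r t where a: "a = mat2 p q r t" using mat2_eta by blast
  have dt: "p * t - q * r = 1" using d a by (simp add: det_mat2)
  have fs: "f 0 (-1) 1 0 = 3" by (simp add: f_bnz f_b0)
  have "f q (-p) t (-r) = f p q r t + 3 - 12 * Sind p q" using SR_all[OF dt] by (simp add: SR_def)
  then show "F a + F Sm - F (a ** Sm) = cc a Sm"
    unfolding a cc_S[OF dt] by (simp add: Sm_def mat2_mult F_mat2 fs field_simps)
qed

lemma P_U: "P Um"
  unfolding P_def
proof (intro allI impI)
  fix a :: "int^2^2" assume d: "det a = 1"
  obtain p q r t where a: "a = mat2 p q r t" using mat2_eta by blast
  have dt: "p * t - q * r = 1" using d a by (simp add: det_mat2)
  have fu: "f 1 0 1 1 = 1" by (simp add: f_b0)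
  have "f (p + q) q (r + t) t = f p q r t + 1" using fU[OF dt] .
  then show "F a + F Um - F (a ** Um) = cc a Um"
    unfolding a cc_U by (simp add: Um_def mat2_mult F_mat2 fu field_simps)
qed

lemma P_I: "P Id2"
  unfolding P_def
proof (intro allI impI)
  fix a :: "int^2^2" assume d: "det a = 1"
  have "F Id2 = 0" by (simp add: Id2_def F_mat2 f_b0)
  then show "F a + F Id2 - F (a ** Id2) = cc a Id2"
    by (simp add: Id2_mat cc_def delta_same)
qed

lemma P_step:
  assumes Pb: "P b" and Ps: "P s" and db: "det b = 1" and ds: "det s = 1"
  shows "P (b ** s)"
  unfolding P_def
proof (intro allI impI)
  fix a :: "int^2^2" assume da: "det a = 1"
  have dab: "det (a ** b) = 1" using da db by (simp add: det_mul)
  have h1: "F b + F s - F (b ** s) = cc b s" using Ps db unfolding P_def by blast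
  have h2: "F (a ** b) + F s - F (a ** b ** s) = cc (a ** b) s" using Ps dab unfolding P_def by blast
  have h3: "F a + F b - F (a ** b) = cc a b" using Pb da unfolding P_def by blast
  have nz: "ell0 \<noteq> 0" "ray_act a ell0 \<noteq> 0" "ray_act (a ** b) ell0 \<noteq> 0"
    "ray_act (a ** b ** s) ell0 \<noteq> 0" "ray_act b ell0 \<noteq> 0" "ray_act (b ** s) ell0 \<noteq> 0"
    using ell0_nz ray_act_nz da db ds dab by (auto simp: det_mul)
  have inv: "cc b s = delta (ray_act a ell0) (ray_act (a ** b) ell0) (ray_act (a ** b ** s) ell0)"
    unfolding cc_def using delta_act[OF da nz(1) nz(5) nz(6)]
    by (simp add: ray_act_comp matrix_mul_assoc)
  have coc: "cc a b + cc (a ** b) s - cc b s = cc a (b ** s)"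
    unfolding inv unfolding cc_def
    using delta_cocycle[OF nz(1-4)] by (simp add: matrix_mul_assoc)
  show "F a + F (b ** s) - F (a ** (b ** s)) = cc a (b ** s)"
    using h1 h2 h3 coc by (simp add: matrix_mul_assoc)
qed

lemma P_gen: "b \<in> gen \<Longrightarrow> P b"
proof (induction rule: gen.induct)
  case gen_I then show ?case by (rule P_I)
next
  case (gen_S g) then show ?case
    using P_step[OF _ P_S] gen_SL2 by (simp add: Sm_def det_mat2)
next
  case (gen_U g) then show ?case
    using P_step[OF _ P_U] gen_SL2 by (simp add: Um_def det_mat2)
qed

lemma sl2_inv_left: "det g = 1 \<Longrightarrow> sl2_inv g ** g = mat 1"
proof -
  assume d: "det g = 1"
  obtain p q r t where g: "g = mat2 p q r t" using mat2_eta by blast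
  have "p * t - q * r = 1" using d g by (simp add: det_mat2)
  then show ?thesis unfolding g sl2_inv_mat2 mat2_mult Id2_mat[symmetric] Id2_def mat2_eq_iff
    by (simp add: algebra_simps)
qed

lemma sl2_inv_right: "det g = 1 \<Longrightarrow> g ** sl2_inv g = mat 1"
proof -
  assume d: "det g = 1"
  obtain p q r t where g: "g = mat2 p q r t" using mat2_eta by blast
  have "p * t - q * r = 1" using d g by (simp add: det_mat2)
  then show ?thesis unfolding g sl2_inv_mat2 mat2_mult Id2_mat[symmetric] Id2_def mat2_eq_iff
    by (simp add: algebra_simps)
qed

lemma det_sl2_inv: "det (sl2_inv g) = det g"
proof -
  obtain p q r t where g: "g = mat2 p q r t" using mat2_eta by blast
  show ?thesis unfolding g sl2_inv_mat2 det_mat2 by (simp add: algebra_simps)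
qed

lemma sl2_inv_mult: "sl2_inv (g ** h) = sl2_inv h ** sl2_inv g"
proof -
  obtain p q r t where g: "g = mat2 p q r t" using mat2_eta by blast
  obtain p' q' r' t' where h: "h = mat2 p' q' r' t'" using mat2_eta by blast
  show ?thesis unfolding g h sl2_inv_mat2 mat2_mult mat2_eq_iff by (simp add: algebra_simps)
qed

definition phi0 :: "int^2^2 \<Rightarrow> int^2^2 \<Rightarrow> real" where
  "phi0 g1 g2 = F (sl2_inv g1 ** g2)"

lemma phi0_prop: "phi_prop phi0"
  unfolding phi_prop_def
proof (intro conjI ballI)
  fix g1 g2 :: "int^2^2"
  show "\<exists>k::int. phi0 g1 g2 = of_int k / 12"
    unfolding phi0_def F_def by blast
next
  fix h g1 g2 :: "int^2^2" assume "h \<in> SL2" "g1 \<in> SL2" "g2 \<in> SL2"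
  then have dh: "det h = 1" by (simp add: SL2_def)
  have "sl2_inv (h ** g1) ** (h ** g2) = sl2_inv g1 ** (sl2_inv h ** h) ** g2"
    by (simp add: sl2_inv_mult matrix_mul_assoc)
  also have "\<dots> = sl2_inv g1 ** g2" using sl2_inv_left[OF dh] by simp
  finally show "phi0 (h ** g1) (h ** g2) = phi0 g1 g2" by (simp add: phi0_def)
next
  fix g1 g2 g3 :: "int^2^2" assume "g1 \<in> SL2" "g2 \<in> SL2" "g3 \<in> SL2"
  then have d1: "det g1 = 1" and d2: "det g2 = 1" and d3: "det g3 = 1" by (simp_all add: SL2_def)
  define a where "a = sl2_inv g1 ** g2"
  define b where "b = sl2_inv g2 ** g3"
  have da: "det a = 1" using d1 d2 by (simp add: a_def det_mul det_sl2_inv)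
  have dbb: "det b = 1" using d2 d3 by (simp add: b_def det_mul det_sl2_inv)
  have ab: "a ** b = sl2_inv g1 ** g3"
  proof -
    have "a ** b = sl2_inv g1 ** (g2 ** sl2_inv g2) ** g3" by (simp add: a_def b_def matrix_mul_assoc)
    then show ?thesis using sl2_inv_right[OF d2] by simp
  qed
  have g1a: "g1 ** a = g2"
  proof -
    have "g1 ** a = (g1 ** sl2_inv g1) ** g2" by (simp add: a_def matrix_mul_assoc)
    then show ?thesis using sl2_inv_right[OF d1] by simp
  qed
  have g1ab: "g1 ** (a ** b) = g3"
  proof -
    have "g1 ** (a ** b) = (g1 ** sl2_inv g1) ** g3" by (simp add: ab matrix_mul_assoc)
    then show ?thesis using sl2_inv_right[OF d1] by simp
  qed
  have Pb: "P b" using P_gen SL2_gen[OF dbb] by blast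
  then have e: "F a + F b - F (a ** b) = cc a b" using da unfolding P_def by blast
  have nz: "ell0 \<noteq> 0" "ray_act a ell0 \<noteq> 0" "ray_act (a ** b) ell0 \<noteq> 0"
    using ell0_nz ray_act_nz da dbb by (auto simp: det_mul)
  have "delta (ray_act g1 ell0) (ray_act g2 ell0) (ray_act g3 ell0) = cc a b"
  proof -
    have "delta (ray_act g1 ell0) (ray_act g2 ell0) (ray_act g3 ell0) =
      delta (ray_act g1 ell0) (ray_act g1 (ray_act a ell0)) (ray_act g1 (ray_act (a ** b) ell0))"
      by (simp add: ray_act_comp[symmetric] g1a g1ab)
    also have "\<dots> = cc a b" unfolding cc_def using delta_act[OF d1 nz] .
    finally show ?thesis .
  qed
  then show "phi0 g1 g2 + phi0 g2 g3 - phi0 g1 g3 = delta (ray_act g1 ell0) (ray_act g2 ell0) (ray_act g3 ell0)"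
    using e unfolding phi0_def a_def[symmetric] b_def[symmetric] ab[symmetric] by simp
qed

lemma Sm4: "Sm ** Sm ** (Sm ** Sm) = mat 1"
  by (simp add: Sm_def mat2_mult Id2_mat[symmetric] Id2_def)

lemma W3: "(Sm ** Um) ** (Sm ** Um) ** (Sm ** Um) = mat 1"
  by (simp add: Sm_def Um_def mat2_mult Id2_mat[symmetric] Id2_def)

lemma uniq:
  assumes "phi_prop \<psi>" "g1 \<in> SL2" "g2 \<in> SL2"
  shows "\<psi> g1 g2 = phi0 g1 g2"
proof -
  define D where "D x y = \<psi> x y - phi0 x y" for x y
  have inv: "\<And>h x y. h \<in> SL2 \<Longrightarrow> x \<in> SL2 \<Longrightarrow> y \<in> SL2 \<Longrightarrow> D (h ** x) (h ** y) = D x y"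
    using assms(1) phi0_prop unfolding phi_prop_def D_def by simp
  have coc: "\<And>x y z. x \<in> SL2 \<Longrightarrow> y \<in> SL2 \<Longrightarrow> z \<in> SL2 \<Longrightarrow> D x y + D y z - D x z = 0"
  proof -
    fix x y z assume h: "x \<in> SL2" "y \<in> SL2" "z \<in> SL2"
    have "\<psi> x y + \<psi> y z - \<psi> x z = delta (ray_act x ell0) (ray_act y ell0) (ray_act z ell0)"
      using assms(1) h unfolding phi_prop_def by blast
    moreover have "phi0 x y + phi0 y z - phi0 x z = delta (ray_act x ell0) (ray_act y ell0) (ray_act z ell0)"
      using phi0_prop h unfolding phi_prop_def by blast
    ultimately show "D x y + D y z - D x z = 0" unfolding D_def by simp
  qed
  have I1: "mat 1 \<in> SL2" by (simp add: SL2_def)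
  define H where "H g = D (mat 1) g" for g
  have mulSL: "\<And>x y. x \<in> SL2 \<Longrightarrow> y \<in> SL2 \<Longrightarrow> x ** y \<in> SL2"
    by (simp add: SL2_def det_mul)
  have hom: "\<And>x y. x \<in> SL2 \<Longrightarrow> y \<in> SL2 \<Longrightarrow> H (x ** y) = H x + H y"
  proof -
    fix x y assume h: "x \<in> SL2" "y \<in> SL2"
    have "D (mat 1) x + D x (x ** y) - D (mat 1) (x ** y) = 0" using coc[OF I1 h(1) mulSL[OF h]] .
    moreover have "D x (x ** y) = D (mat 1) y" using inv[OF h(1) I1 h(2)] by simp
    ultimately show "H (x ** y) = H x + H y" unfolding H_def by simp
  qed
  have H1: "H (mat 1) = 0" using coc[OF I1 I1 I1] unfolding H_def by simp
  have SmS: "Sm \<in> SL2" "Um \<in> SL2" by (simp_all add: SL2_def Sm_def Um_def det_mat2)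
  have HS: "H Sm = 0"
  proof -
    have "H (Sm ** Sm ** (Sm ** Sm)) = 4 * H Sm"
      using hom[OF mulSL[OF SmS(1) SmS(1)] mulSL[OF SmS(1) SmS(1)]] hom[OF SmS(1) SmS(1)] by simp
    then show ?thesis using Sm4 H1 by simp
  qed
  have HU: "H Um = 0"
  proof -
    have W: "Sm ** Um \<in> SL2" using mulSL SmS by blast
    have "H ((Sm ** Um) ** (Sm ** Um) ** (Sm ** Um)) = 3 * H (Sm ** Um)"
      using hom[OF mulSL[OF W W] W] hom[OF W W] by simp
    then have "H (Sm ** Um) = 0" using W3 H1 by simp
    then show ?thesis using hom[OF SmS] HS by simp
  qed
  have Hgen: "\<And>g. g \<in> gen \<Longrightarrow> H g = 0"
  proof -
    fix g assume "g \<in> gen"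
    then show "H g = 0"
    proof (induction rule: gen.induct)
      case gen_I then show ?case using H1 by (simp add: Id2_mat)
    next
      case (gen_S g)
      have "g \<in> SL2" using gen_SL2[OF gen_S(1)] by (simp add: SL2_def)
      then show ?case using hom[OF _ SmS(1)] gen_S HS by simp
    next
      case (gen_U g)
      have "g \<in> SL2" using gen_SL2[OF gen_U(1)] by (simp add: SL2_def)
      then show ?case using hom[OF _ SmS(2)] gen_U HU by simp
    qed
  qed
  have d1: "det g1 = 1" using assms(2) by (simp add: SL2_def)
  have i1: "sl2_inv g1 \<in> SL2" using d1 by (simp add: SL2_def det_sl2_inv)
  have "D g1 g2 = D (sl2_inv g1 ** g1) (sl2_inv g1 ** g2)" using inv[OF i1 assms(2,3)] by simp
  also have "\<dots> = H (sl2_inv g1 ** g2)" unfolding H_def using sl2_inv_left[OF d1] by simp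
  also have "\<dots> = 0"
  proof -
    have "det (sl2_inv g1 ** g2) = 1" using i1 assms(3) mulSL by (simp add: SL2_def)
    then show ?thesis using Hgen SL2_gen by blast
  qed
  finally show ?thesis unfolding D_def by simp
qed

theorem mainTheorem15:
  shows "\<exists>\<phi>. phi_prop \<phi> \<and>
           (\<forall>\<psi>. phi_prop \<psi> \<longrightarrow> (\<forall>g1\<in>SL2. \<forall>g2\<in>SL2. \<psi> g1 g2 = \<phi> g1 g2))"
  using phi0_prop uniq by blast

end
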